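(* For the R-GSAV/BDF$k$ scheme with the choice of $\zeta_0$ and $\gamma^{n+1}$ given in the context, suppose $R^n\le E(\phi^n)$ and $R^n\ge 0$. If at step $n$ one is in Case 1, 2 or 3 (i.e., not in Case 4), then $R^{n+1}=E(\phi^{n+1})$ and $$E(\phi^{n+1})=R^{n+1}\le R^n\le E(\phi^n).$$ In particular, the modified energy coincides with the original energy $E$ at step $n+1$, and $E$ does not increase over that step.
   Context: Setting: a dissipative system $\partial_t\phi+\mathcal A\phi+g(\phi)=0$ with $\mathcal A$ positive linear, satisfying $\frac{d}{dt}E_{tot}(\phi)=-\mathcal K(\phi)$, $\mathcal K(\phi)>0$, $E_{tot}\ge-C_0$, $E=E_{tot}+C_0>0$. BDF$k$ data $\alpha_k,A_k,B_k$ ($1\le k\le5$): $k=1$: $1,\ \phi^n,\ \phi^n$; $k=2$: $\frac32,\ 2\phi^n-\frac12\phi^{n-1},\ 2\phi^n-\phi^{n-1}$; $k=3$: $\frac{11}6,\ 3\phi^n-\frac32\phi^{n-1}+\frac13\phi^{n-2},\ 3\phi^n-3\phi^{n-1}+\phi^{n-2}$; $k=4$: $\frac{25}{12},\ 4\phi^n-3\phi^{n-1}+\frac43\phi^{n-2}-\frac14\phi^{n-3},\ 4\phi^n-6\phi^{n-1}+4\phi^{n-2}-\phi^{n-3}$; $k=5$: $\frac{137}{60},\ 5\phi^n-5\phi^{n-1}+\frac{10}3\phi^{n-2}-\frac54\phi^{n-3}+\frac15\phi^{n-4},\ 5\phi^n-10\phi^{n-1}+10\phi^{n-2}-5\phi^{n-3}+\phi^{n-4}$.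 Scheme: Step 1: $\frac{\alpha_k\bar\phi^{n+1}-A_k(\phi^n)}{\delta t}+\mathcal A\bar\phi^{n+1}+g[B_k(\bar\phi^n)]=0$; $\frac{\tilde R^{n+1}-R^n}{\delta t}=-\frac{\tilde R^{n+1}}{E(\bar\phi^{n+1})}\mathcal K(\bar\phi^{n+1})$; $\xi^{n+1}=\tilde R^{n+1}/E(\bar\phi^{n+1})$, $\eta_k^{n+1}=1-(1-\xi^{n+1})^{k+1}$, $\phi^{n+1}=\eta_k^{n+1}\bar\phi^{n+1}$. Step 2: $R^{n+1}=\zeta_0\tilde R^{n+1}+(1-\zeta_0)E(\phi^{n+1})$, where: Case 1 ($\tilde R^{n+1}=E(\phi^{n+1})$): $\zeta_0=0$, $\gamma^{n+1}=\frac{\tilde R^{n+1}\mathcal K(\bar\phi^{n+1})}{E(\bar\phi^{n+1})\mathcal K(\phi^{n+1})}$; Case 2 ($\tilde R^{n+1}>E(\phi^{n+1})$): $\zeta_0=0$, $\gamma^{n+1}=\frac{\tilde R^{n+1}-E(\phi^{n+1})}{\delta t\mathcal K(\phi^{n+1})}+\frac{\tilde R^{n+1}\mathcal K(\bar\phi^{n+1})}{E(\bar\phi^{n+1})\mathcal K(\phi^{n+1})}$; Case 3 ($\tilde R^{n+1}<E(\phi^{n+1})$ and $\tilde R^{n+1}-E(\phi^{n+1})+\delta t\frac{\tilde R^{n+1}}{E(\bar\phi^{n+1})}\mathcal K(\bar\phi^{n+1})\ge0$): $\zeta_0=0$, $\gamma^{n+1}$ as in Case 2; Case 4 (otherwise):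 $\zeta_0=1-\frac{\delta t\tilde R^{n+1}\mathcal K(\bar\phi^{n+1})}{E(\bar\phi^{n+1})(E(\phi^{n+1})-\tilde R^{n+1})}$, $\gamma^{n+1}=0$. *)

theory Defs
  imports "HOL-Analysis.Analysis"
begin

definition bdf_alpha :: "nat \<Rightarrow> real" where
  "bdf_alpha k = (if k = 1 then 1 else if k = 2 then 3/2 else if k = 3 then 11/6
                  else if k = 4 then 25/12 else 137/60)"

definition bdf_A :: "nat \<Rightarrow> (nat \<Rightarrow> 'v::real_vector) \<Rightarrow> nat \<Rightarrow> 'v" where
  "bdf_A k phi n =
    (if k = 1 then phi n
     else if k = 2 then 2 *\<^sub>R phi n - (1/2) *\<^sub>R phi (n-1)
     else if k = 3 then 3 *\<^sub>R phi n - (3/2) *\<^sub>R phi (n-1) + (1/3) *\<^sub>R phi (n-2)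
     else if k = 4 then 4 *\<^sub>R phi n - 3 *\<^sub>R phi (n-1) + (4/3) *\<^sub>R phi (n-2)
                        - (1/4) *\<^sub>R phi (n-3)
     else 5 *\<^sub>R phi n - 5 *\<^sub>R phi (n-1) + (10/3) *\<^sub>R phi (n-2)
          - (5/4) *\<^sub>R phi (n-3) + (1/5) *\<^sub>R phi (n-4))"

definition bdf_B :: "nat \<Rightarrow> (nat \<Rightarrow> 'v::real_vector) \<Rightarrow> nat \<Rightarrow> 'v" where
  "bdf_B k phi n =
    (if k = 1 then phi n
     else if k = 2 then 2 *\<^sub>R phi n - phi (n-1)
     else if k = 3 then 3 *\<^sub>R phi n - 3 *\<^sub>R phi (n-1) + phi (n-2)
     else if k = 4 then 4 *\<^sub>R phi n - 6 *\<^sub>R phi (n-1) + 4 *\<^sub>R phi (n-2) - phi (n-3)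
     else 5 *\<^sub>R phi n - 10 *\<^sub>R phi (n-1) + 10 *\<^sub>R phi (n-2)
          - 5 *\<^sub>R phi (n-3) + phi (n-4))"

definition rgsav_case4 :: "real \<Rightarrow> real \<Rightarrow> real \<Rightarrow> real \<Rightarrow> real \<Rightarrow> bool" where
  "rgsav_case4 dt Rt Ebar Kbar Enew \<longleftrightarrow>
     Rt < Enew \<and> \<not> (Rt - Enew + dt * (Rt / Ebar) * Kbar \<ge> 0)"

definition rgsav_zeta0 :: "real \<Rightarrow> real \<Rightarrow> real \<Rightarrow> real \<Rightarrow> real \<Rightarrow> real" where
  "rgsav_zeta0 dt Rt Ebar Kbar Enew =
     (if rgsav_case4 dt Rt Ebar Kbar Enew
      then 1 - (dt * Rt * Kbar) / (Ebar * (Enew - Rt)) else 0)"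

end

theory Submission
  imports Defs
begin

theorem mainTheorem2:
  fixes Aop g :: "'v::real_inner \<Rightarrow> 'v"
    and E K :: "'v \<Rightarrow> real"
    and phi phibar :: "nat \<Rightarrow> 'v"
    and R :: "nat \<Rightarrow> real"
    and Rt dt :: real
    and k n :: nat
  assumes lin: "linear Aop"
    and Apos: "\<And>v. v \<noteq> 0 \<Longrightarrow> inner (Aop v) v > 0"
    and Epos: "\<And>v. E v > 0"
    and Kpos: "\<And>v. K v > 0"
    and dt: "dt > 0"
    and k: "1 \<le> k" "k \<le> 5" "k \<le> n + 1"
    and step1: "(bdf_alpha k *\<^sub>R phibar (n+1) - bdf_A k phi n) /\<^sub>R dt
                 + Aop (phibar (n+1)) + g (bdf_B k phibar n) = 0"
    and Rtilde: "(Rt - R n) / dt = - (Rt / E (phibar (n+1))) * K (phibar (n+1))"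
    and update: "phi (n+1) =
          (1 - (1 - Rt / E (phibar (n+1))) ^ (k+1)) *\<^sub>R phibar (n+1)"
    and step2: "R (n+1) =
          rgsav_zeta0 dt Rt (E (phibar (n+1))) (K (phibar (n+1))) (E (phi (n+1))) * Rt
          + (1 - rgsav_zeta0 dt Rt (E (phibar (n+1))) (K (phibar (n+1))) (E (phi (n+1))))
            * E (phi (n+1))"
    and hypR: "R n \<le> E (phi n)" "R n \<ge> 0"
    and notcase4: "\<not> rgsav_case4 dt Rt (E (phibar (n+1))) (K (phibar (n+1))) (E (phi (n+1)))"
  shows "R (n+1) = E (phi (n+1)) \<and> E (phi (n+1)) = R (n+1) \<and> R (n+1) \<le> R n \<and> R n \<le> E (phi n)"
proof -
  define Eb where "Eb = E (phibar (n+1))"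
  define Kb where "Kb = K (phibar (n+1))"
  define En where "En = E (phi (n+1))"
  have Eb: "Eb > 0" "Kb > 0" using Epos Kpos by (auto simp: Eb_def Kb_def)
  have z: "rgsav_zeta0 dt Rt Eb Kb En = 0" using notcase4
    by (simp add: rgsav_zeta0_def Eb_def Kb_def En_def)
  have R1: "R (n+1) = En" using step2 z by (simp add: Eb_def Kb_def En_def)
  have eq: "Rt - R n = - dt * (Rt / Eb) * Kb" using Rtilde dt
    by (simp add: Eb_def Kb_def field_simps)
  have rt: "Rt * (1 + dt * Kb / Eb) = R n" using eq Eb by (simp add: field_simps)
  have pos: "1 + dt * Kb / Eb > 0" using Eb dt by (simp add: field_simps add_pos_pos)
  have "Rt \<ge> 0"
  proof (rule ccontr)
    assume "\<not> Rt \<ge> 0"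
    hence "Rt * (1 + dt * Kb / Eb) < 0" using pos by (simp add: mult_neg_pos)
    thus False using rt hypR(2) by simp
  qed
  have "dt * (Rt / Eb) * Kb \<ge> 0" using \<open>Rt \<ge> 0\<close> Eb dt by simp
  hence "Rt \<le> R n" using eq by linarith
  have "En \<le> R n"
    using notcase4 eq \<open>Rt \<le> R n\<close>
    unfolding rgsav_case4_def Eb_def[symmetric] Kb_def[symmetric] En_def[symmetric] by linarith
  thus ?thesis using R1 hypR by (simp add: En_def)
qed

end
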